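(* Let $w\in\mathbb{R}^n$ be a strictly positive vector and $\mu>0$, and define $f_i^*=\min\{1,\mu/w_i\}$ for $i\in[n]$. Then for any matrix $A\in\mathbb{R}^{n\times n}$, $$\sup_{f\in\mathbb{R}^n:\ \|f\|_{w,1}\le\mu,\ \|f\|_1\le1}\left\{f^\top Af\right\}\le4\sup_{i,j\in[n]}\left\{f_i^*|A_{ij}|f_j^*\right\}.$$
   Context: $\|f\|_{w,1}=\sum_i w_i|f_i|$ denotes the weighted $\ell_1$-norm and $\|f\|_1=\sum_i|f_i|$. *)

theory Defs
  imports "HOL-Analysis.Analysis"
begin

definition wl1_norm :: "real ^ 'n \<Rightarrow> real ^ 'n \<Rightarrow> real" where
  "wl1_norm w f = (\<Sum>i\<in>UNIV. w $ i * \<bar>f $ i\<bar>)"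

definition l1_norm :: "real ^ 'n \<Rightarrow> real" where
  "l1_norm f = (\<Sum>i\<in>UNIV. \<bar>f $ i\<bar>)"

end

theory Submission
  imports Defs
begin

theorem lemma4:
  fixes w :: "real ^ 'n" and \<mu> :: real and A :: "real ^ 'n ^ 'n"
  assumes w_pos: "\<forall>i. w $ i > 0"
    and mu_pos: "\<mu> > 0"
  defines "fstar \<equiv> (\<lambda>i. min 1 (\<mu> / w $ i))"
  shows "(SUP f \<in> {f :: real ^ 'n. wl1_norm w f \<le> \<mu> \<and> l1_norm f \<le> 1}. f \<bullet> (A *v f))
           \<le> 4 * (SUP ij \<in> (UNIV :: ('n \<times> 'n) set).
                     fstar (fst ij) * \<bar>A $ fst ij $ snd ij\<bar> * fstar (snd ij))"
proof -
  define M where "M = (SUP ij \<in> (UNIV :: ('n \<times> 'n) set).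
                     fstar (fst ij) * \<bar>A $ fst ij $ snd ij\<bar> * fstar (snd ij))"
  have fpos: "fstar i > 0" for i using w_pos mu_pos unfolding fstar_def by auto
  have Mub: "fstar i * \<bar>A $ i $ j\<bar> * fstar j \<le> M" for i j
    unfolding M_def
    by (rule cSUP_upper2[where x="(i,j)"]) (auto intro: bdd_above_finite simp: finite_imageI)
  have M0: "0 \<le> M" using Mub[of undefined undefined] fpos
    by (meson mult_nonneg_nonneg abs_ge_zero less_imp_le order_trans)
  have main: "f \<bullet> (A *v f) \<le> 4 * M" if hf: "wl1_norm w f \<le> \<mu>" "l1_norm f \<le> 1" for f
  proof -
    define g where "g i = \<bar>f $ i\<bar> / fstar i" for i
    have g0: "g i \<ge> 0" for i using fpos[of i] unfolding g_def by auto
    have gle: "g i \<le> \<bar>f $ i\<bar> + w $ i * \<bar>f $ i\<bar> / \<mu>" for i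
    proof (cases "1 \<le> \<mu> / w $ i")
      case True
      then have "fstar i = 1" unfolding fstar_def by auto
      then show ?thesis unfolding g_def using w_pos mu_pos
        by (simp add: less_imp_le)
    next
      case False
      then have "fstar i = \<mu> / w $ i" unfolding fstar_def by auto
      then have "g i = w $ i * \<bar>f $ i\<bar> / \<mu>" unfolding g_def using w_pos mu_pos by simp
      then show ?thesis by simp
    qed
    have "(\<Sum>i\<in>UNIV. g i) \<le> (\<Sum>i\<in>UNIV. \<bar>f $ i\<bar> + w $ i * \<bar>f $ i\<bar> / \<mu>)"
      by (rule sum_mono) (rule gle)
    also have "\<dots> = l1_norm f + wl1_norm w f / \<mu>"
      unfolding l1_norm_def wl1_norm_def by (simp add: sum.distrib sum_divide_distrib)
    also have "\<dots> \<le> 2" using hf mu_pos divide_le_eq_1_pos[of \<mu> "wl1_norm w f"] by linarith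
    finally have gs: "(\<Sum>i\<in>UNIV. g i) \<le> 2" .
    have gs0: "0 \<le> (\<Sum>i\<in>UNIV. g i)" by (simp add: g0 sum_nonneg)
    have tm: "f $ i * (A $ i $ j * f $ j) \<le> M * (g i * g j)" for i j
    proof -
      have "f $ i * (A $ i $ j * f $ j) \<le> \<bar>f $ i\<bar> * \<bar>A $ i $ j\<bar> * \<bar>f $ j\<bar>"
        by (metis abs_ge_self abs_mult mult.assoc)
      also have "\<dots> = (g i * g j) * (fstar i * \<bar>A $ i $ j\<bar> * fstar j)"
        unfolding g_def using fpos[of i] fpos[of j] by (simp add: field_simps)
      also have "\<dots> \<le> (g i * g j) * M"
        by (rule mult_left_mono[OF Mub]) (simp add: g0)
      finally show ?thesis by (simp add: mult.commute)
    qed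
    have "f \<bullet> (A *v f) = (\<Sum>i\<in>UNIV. \<Sum>j\<in>UNIV. f $ i * (A $ i $ j * f $ j))"
      by (simp add: inner_vec_def matrix_vector_mult_def sum_distrib_left)
    also have "\<dots> \<le> (\<Sum>i\<in>UNIV. \<Sum>j\<in>UNIV. M * (g i * g j))"
      by (intro sum_mono tm)
    also have "\<dots> = M * (\<Sum>i\<in>UNIV. g i) * (\<Sum>i\<in>UNIV. g i)"
      by (simp add: sum_distrib_left sum_distrib_right mult.assoc mult.left_commute mult.commute)
    also have "\<dots> \<le> M * 2 * 2"
      using gs gs0 M0 mult_mono[of "sum g UNIV" 2 "sum g UNIV" 2] by (simp add: mult.assoc mult_left_mono)
    finally show ?thesis by simp
  qed
  have "(SUP f \<in> {f :: real ^ 'n. wl1_norm w f \<le> \<mu> \<and> l1_norm f \<le> 1}. f \<bullet> (A *v f)) \<le> 4 * M"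
  proof (rule cSUP_least)
    show "{f :: real ^ 'n. wl1_norm w f \<le> \<mu> \<and> l1_norm f \<le> 1} \<noteq> {}"
      using mu_pos by (intro ex_in_conv[THEN iffD1] exI[of _ 0]) (simp add: wl1_norm_def l1_norm_def)
  qed (use main in auto)
  then show ?thesis unfolding M_def .
qed

end
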